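(* Let $\mathcal A$ be a class of spaces and let $X$ be a compactum with a binary normal closed subbase $\mathcal S$ such that the superextension $\lambda X$ is an absolute extensor for all spaces in $\mathcal A$. Then every open $\mathcal S$-convex continuous surjection $f\colon X\to Y$ is $\mathcal A$-soft.
   Context: All spaces are Tychonoff and maps continuous. A space $K$ is an absolute extensor for $Z$ if every continuous map from a closed subset of $Z$ to $K$ extends continuously to $Z$. A map $f\colon X\to Y$ is $\mathcal A$-soft if for any $Z\in\mathcal A$, closed $A\subset Z$ and continuous $k\colon Z\to Y$, $h\colon A\to X$ with $f\circ h=k|A$, there is a continuous $g\colon Z\to X$ extending $h$ with $f\circ g=k$. A family of sets is linked if any two members intersect. The superextension $\lambda X$ is the set of all maximal linked systems of closed subsets of $X$ with the topology generated by the subbase $\{U^+:U\subset X\text{ open}\}$, $U^+=\{\eta\in\lambda X:F\subset U\text{ for some }F\in\eta\}$. A family $\mathcal S$ of closed subsets of $X$ is a closed subbase if every closed set is an intersection of finite unions of members of $\mathcal S$; it is binary if every linked subfamily has nonempty intersection; it is normal if for every disjoint $S_0,S_1\in\mathcal S$ there exist $T_0,T_1\in\mathcal S$ with $S_0\cap T_1=\varnothing=T_0\cap S_1$ and $T_0\cup T_1=X$. For $B\subset X$, $I_{\mathcal S}(B)=\bigcap\{S\in\mathcal S:B\subset S\}$; $B$ is $\mathcal S$-convex if $I_{\mathcal S}(\{x,y\})\subset B$ for all $x,y\in B$; $f$ is $\mathcal S$-convex if all its fibers are $\mathcal S$-convex. *)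

theory Defs
  imports "HOL-Analysis.Analysis"
begin

definition tychonoff_space :: "'a topology \<Rightarrow> bool" where
  "tychonoff_space X \<longleftrightarrow> completely_regular_space X \<and> Hausdorff_space X"

definition linked_family :: "'a set set \<Rightarrow> bool" where
  "linked_family \<F> \<longleftrightarrow> (\<forall>A\<in>\<F>. \<forall>B\<in>\<F>. A \<inter> B \<noteq> {})"

definition max_linked_system :: "'a topology \<Rightarrow> 'a set set \<Rightarrow> bool" where
  "max_linked_system X \<eta> \<longleftrightarrow>
     (\<forall>F\<in>\<eta>. closedin X F) \<and> linked_family \<eta> \<and>
     (\<forall>\<xi>. \<eta> \<subseteq> \<xi> \<and> (\<forall>F\<in>\<xi>. closedin X F) \<and> linked_family \<xi> \<longrightarrow> \<xi> = \<eta>)"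

definition superext_space :: "'a topology \<Rightarrow> 'a set set set" where
  "superext_space X = {\<eta>. max_linked_system X \<eta>}"

definition superext_plus :: "'a topology \<Rightarrow> 'a set \<Rightarrow> 'a set set set" where
  "superext_plus X U = {\<eta> \<in> superext_space X. \<exists>F\<in>\<eta>. F \<subseteq> U}"

definition superextension :: "'a topology \<Rightarrow> 'a set set topology" where
  "superextension X =
     subtopology (topology_generated_by {superext_plus X U | U. openin X U}) (superext_space X)"

definition absolute_extensor_for :: "'k topology \<Rightarrow> 'z topology \<Rightarrow> bool" where
  "absolute_extensor_for K Z \<longleftrightarrow>
     (\<forall>A g. closedin Z A \<and> continuous_map (subtopology Z A) K g \<longrightarrow>
        (\<exists>h. continuous_map Z K h \<and> (\<forall>x\<in>A. h x = g x)))"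

definition soft_map :: "'z topology set \<Rightarrow> 'a topology \<Rightarrow> 'b topology \<Rightarrow> ('a \<Rightarrow> 'b) \<Rightarrow> bool" where
  "soft_map \<A> X Y f \<longleftrightarrow>
     (\<forall>Z\<in>\<A>. \<forall>A k h. closedin Z A \<and> continuous_map Z Y k \<and>
        continuous_map (subtopology Z A) X h \<and> (\<forall>a\<in>A. f (h a) = k a) \<longrightarrow>
        (\<exists>g. continuous_map Z X g \<and> (\<forall>a\<in>A. g a = h a) \<and>
             (\<forall>z\<in>topspace Z. f (g z) = k z)))"

definition closed_subbase :: "'a topology \<Rightarrow> 'a set set \<Rightarrow> bool" where
  "closed_subbase X \<S> \<longleftrightarrow>
     (\<forall>S\<in>\<S>. closedin X S) \<and>
     (\<forall>C. closedin X C \<longrightarrow>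
        (\<exists>\<B>. (\<forall>B\<in>\<B>. \<exists>\<T>. finite \<T> \<and> \<T> \<subseteq> \<S> \<and> B = \<Union>\<T>) \<and>
              C = topspace X \<inter> \<Inter>\<B>))"

definition binary_family :: "'a topology \<Rightarrow> 'a set set \<Rightarrow> bool" where
  "binary_family X \<S> \<longleftrightarrow>
     (\<forall>\<L>. \<L> \<subseteq> \<S> \<and> linked_family \<L> \<longrightarrow> topspace X \<inter> \<Inter>\<L> \<noteq> {})"

definition normal_family :: "'a topology \<Rightarrow> 'a set set \<Rightarrow> bool" where
  "normal_family X \<S> \<longleftrightarrow>
     (\<forall>S0\<in>\<S>. \<forall>S1\<in>\<S>. S0 \<inter> S1 = {} \<longrightarrow>
        (\<exists>T0\<in>\<S>. \<exists>T1\<in>\<S>. S0 \<inter> T1 = {} \<and> T0 \<inter> S1 = {} \<and> T0 \<union> T1 = topspace X))"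

definition S_hull :: "'a topology \<Rightarrow> 'a set set \<Rightarrow> 'a set \<Rightarrow> 'a set" where
  "S_hull X \<S> B = topspace X \<inter> \<Inter>{S\<in>\<S>. B \<subseteq> S}"

definition S_convex :: "'a topology \<Rightarrow> 'a set set \<Rightarrow> 'a set \<Rightarrow> bool" where
  "S_convex X \<S> B \<longleftrightarrow> (\<forall>x\<in>B. \<forall>y\<in>B. S_hull X \<S> {x, y} \<subseteq> B)"

definition S_convex_map :: "'a topology \<Rightarrow> 'a set set \<Rightarrow> 'b topology \<Rightarrow> ('a \<Rightarrow> 'b) \<Rightarrow> bool" where
  "S_convex_map X \<S> Y f \<longleftrightarrow>
     (\<forall>y\<in>topspace Y. S_convex X \<S> {x\<in>topspace X. f x = y})"

end

theory Submission
  imports Defs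
begin

lemma ml_closed: "max_linked_system X \<eta> \<Longrightarrow> F \<in> \<eta> \<Longrightarrow> closedin X F"
  unfolding max_linked_system_def by blast

lemma ml_linked: "max_linked_system X \<eta> \<Longrightarrow> F \<in> \<eta> \<Longrightarrow> G \<in> \<eta> \<Longrightarrow> F \<inter> G \<noteq> {}"
  unfolding max_linked_system_def linked_family_def by blast

lemma ml_ne:
  assumes "topspace X \<noteq> {}" "max_linked_system X \<eta>" shows "\<eta> \<noteq> {}"
proof
  assume e: "\<eta> = {}"
  have "linked_family {topspace X}" using assms(1) unfolding linked_family_def by auto
  then have "{topspace X} = \<eta>" using assms(2) e unfolding max_linked_system_def by (metis closedin_topspace empty_subsetI singletonD)
  with e show False by auto
qed

lemma ml_add:
  assumes "topspace X \<noteq> {}" "max_linked_system X \<eta>" "closedin X T" "\<forall>F\<in>\<eta>. F \<inter> T \<noteq> {}"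
  shows "T \<in> \<eta>"
proof -
  obtain F where F: "F \<in> \<eta>" using ml_ne[OF assms(1,2)] by auto
  have "T \<noteq> {}" using assms(4) F by auto
  have "linked_family (insert T \<eta>)" using assms(2,4) \<open>T \<noteq> {}\<close> unfolding linked_family_def max_linked_system_def
    by (auto simp: Int_commute)
  moreover have "\<forall>F\<in>insert T \<eta>. closedin X F" using assms(2,3) unfolding max_linked_system_def by auto
  ultimately have "insert T \<eta> = \<eta>" using assms(2) unfolding max_linked_system_def by blast
  then show ?thesis by auto
qed

lemma ml_dich:
  assumes "topspace X \<noteq> {}" "max_linked_system X \<eta>" "closedin X T0" "T0 \<union> T1 = topspace X"
  shows "T0 \<in> \<eta> \<or> (\<exists>F\<in>\<eta>. F \<subseteq> T1)"
proof (cases "\<forall>F\<in>\<eta>. F \<inter> T0 \<noteq> {}")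
  case True then show ?thesis using ml_add[OF assms(1-3)] by auto
next
  case False
  then obtain F where "F \<in> \<eta>" "F \<inter> T0 = {}" by auto
  moreover have "F \<subseteq> topspace X" using ml_closed[OF assms(2) \<open>F\<in>\<eta>\<close>] closedin_subset by auto
  ultimately show ?thesis using assms(4) by blast
qed

context
  fixes X :: "'a topology" and \<S> :: "'a set set"
  assumes cpt: "compact_space X" and hd: "Hausdorff_space X"
    and sb: "closed_subbase X \<S>" and bin: "binary_family X \<S>" and nor: "normal_family X \<S>"
begin

lemma S_closed: "S \<in> \<S> \<Longrightarrow> closedin X S"
  using sb unfolding closed_subbase_def by blast

lemma S_sub: "S \<in> \<S> \<Longrightarrow> S \<subseteq> topspace X"
  using S_closed closedin_subset by blast

lemma top_ne: "topspace X \<noteq> {}"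
proof -
  have "linked_family {}" unfolding linked_family_def by auto
  then show ?thesis using bin unfolding binary_family_def by force
qed

lemma sep:
  assumes "a \<in> topspace X" "b \<in> topspace X" "a \<noteq> b"
  shows "\<exists>S\<in>\<S>. a \<in> S \<and> b \<notin> S"
proof -
  have "closedin X {a}" using hd assms(1) Hausdorff_imp_t1_space closedin_t1_singleton by (intro closedin_t1_singleton Hausdorff_imp_t1_space hd assms(1))
  then obtain \<B> where B: "\<forall>B\<in>\<B>. \<exists>\<T>. finite \<T> \<and> \<T> \<subseteq> \<S> \<and> B = \<Union>\<T>" "{a} = topspace X \<inter> \<Inter>\<B>"
    using sb unfolding closed_subbase_def by meson
  have "b \<notin> topspace X \<inter> \<Inter>\<B>" using B(2) assms(3) by (metis singletonD)
  then obtain B where "B \<in> \<B>" "b \<notin> B" using assms(2) by blast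
  moreover have "a \<in> B" using B(2) \<open>B \<in> \<B>\<close> by blast
  moreover obtain \<T> where "\<T> \<subseteq> \<S>" "B = \<Union>\<T>" using B(1) \<open>B \<in> \<B>\<close> by blast
  ultimately obtain S where "S \<in> \<T>" "a \<in> S" "b \<notin> S" by blast
  then show ?thesis using \<open>\<T> \<subseteq> \<S>\<close> by blast
qed

lemma disj:
  assumes "S \<in> \<S>" "S \<noteq> {}" "b \<in> topspace X" "b \<notin> S"
  shows "\<exists>R\<in>\<S>. b \<in> R \<and> R \<inter> S = {}"
proof (rule ccontr)
  assume H: "\<not> ?thesis"
  let ?L = "insert S {R\<in>\<S>. b \<in> R}"
  have H': "\<And>R. R \<in> \<S> \<Longrightarrow> b \<in> R \<Longrightarrow> R \<inter> S \<noteq> {}" using H by blast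
  have "linked_family ?L" unfolding linked_family_def
  proof (intro ballI)
    fix A B assume A: "A \<in> ?L" and B: "B \<in> ?L"
    show "A \<inter> B \<noteq> {}"
    proof (cases "A = S")
      case True
      show ?thesis
      proof (cases "B = S")
        case True then show ?thesis using \<open>A = S\<close> assms(2) by simp
      next
        case False then have "B \<in> \<S>" "b \<in> B" using B by auto
        then show ?thesis using H' \<open>A = S\<close> by (simp add: Int_commute)
      qed
    next
      case False then have A': "A \<in> \<S>" "b \<in> A" using A by auto
      show ?thesis
      proof (cases "B = S")
        case True then show ?thesis using H' A' by simp
      next
        case False then have "b \<in> B" using B by auto
        then show ?thesis using A' by blast
      qed
    qed
  qed
  moreover have "?L \<subseteq> \<S>" using assms by auto
  ultimately have "topspace X \<inter> \<Inter>?L \<noteq> {}" using bin unfolding binary_family_def by blast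
  then obtain x where x: "x \<in> topspace X" "x \<in> S" "\<And>R. R\<in>\<S> \<Longrightarrow> b \<in> R \<Longrightarrow> x \<in> R"
    by blast
  have "x = b"
  proof (rule ccontr)
    assume "x \<noteq> b"
    then obtain R where "R \<in> \<S>" "b \<in> R" "x \<notin> R" using sep[OF assms(3) x(1)] by metis
    with x show False by auto
  qed
  with x assms show False by auto
qed

lemma sep2:
  assumes "S \<in> \<S>" "S \<noteq> {}" "b \<in> topspace X" "b \<notin> S"
  shows "\<exists>T0\<in>\<S>. \<exists>T1\<in>\<S>. S \<inter> T1 = {} \<and> b \<notin> T0 \<and> T0 \<union> T1 = topspace X"
proof -
  obtain R where R: "R \<in> \<S>" "b \<in> R" "R \<inter> S = {}" using disj[OF assms] by blast
  have "S \<inter> R = {}" using R(3) by blast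
  have "\<exists>T0\<in>\<S>. \<exists>T1\<in>\<S>. S \<inter> T1 = {} \<and> T0 \<inter> R = {} \<and> T0 \<union> T1 = topspace X"
    by (rule nor[unfolded normal_family_def, rule_format, OF assms(1) R(1) \<open>S \<inter> R = {}\<close>])
  then obtain T0 T1 where T: "T0 \<in> \<S>" "T1 \<in> \<S>" "S \<inter> T1 = {}" "T0 \<inter> R = {}" "T0 \<union> T1 = topspace X"
    by blast
  have "b \<notin> T0" using T(4) R(2) by blast
  then show ?thesis using T by blast
qed

lemma pair:
  assumes C: "S_convex X \<S> C" and "S1 \<in> \<S>" "S2 \<in> \<S>" "S1 \<inter> S2 \<noteq> {}" "c1 \<in> C \<inter> S1" "c2 \<in> C \<inter> S2"
  shows "C \<inter> S1 \<inter> S2 \<noteq> {}"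
proof -
  let ?L = "{S1,S2} \<union> {S\<in>\<S>. {c1,c2}\<subseteq>S}"
  have mem: "\<And>A. A \<in> ?L \<Longrightarrow> (A = S1 \<or> A = S2) \<or> (c1 \<in> A \<and> c2 \<in> A)" by blast
  have "linked_family ?L" unfolding linked_family_def
  proof (intro ballI)
    fix A B assume A: "A \<in> ?L" and B: "B \<in> ?L"
    from mem[OF A] mem[OF B] assms(4,5,6) show "A \<inter> B \<noteq> {}" by (elim disjE conjE) auto
  qed
  moreover have "?L \<subseteq> \<S>" using assms by auto
  ultimately obtain x where x: "x \<in> topspace X \<inter> \<Inter>?L" using bin unfolding binary_family_def by blast
  then have "x \<in> S_hull X \<S> {c1,c2}" unfolding S_hull_def by auto
  then have "x \<in> C" using C assms(5,6) unfolding S_convex_def by blast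
  with x show ?thesis by auto
qed

lemma helly_fin:
  "finite \<F> \<Longrightarrow> \<F> \<subseteq> \<S> \<Longrightarrow> linked_family \<F> \<Longrightarrow> S_convex X \<S> C \<Longrightarrow> C \<noteq> {}
   \<Longrightarrow> (\<forall>S\<in>\<F>. S \<inter> C \<noteq> {}) \<Longrightarrow> C \<inter> \<Inter>\<F> \<noteq> {}"
proof (induction \<F> arbitrary: C rule: finite_induct)
  case empty thus ?case by simp
next
  case (insert S \<F>)
  let ?C = "C \<inter> S"
  have cv: "S_convex X \<S> ?C" using insert.prems unfolding S_convex_def S_hull_def by blast
  have ne: "?C \<noteq> {}" using insert.prems by blast
  have meet: "\<forall>S'\<in>\<F>. S' \<inter> ?C \<noteq> {}"
  proof
    fix S' assume "S' \<in> \<F>"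
    have i: "S \<inter> S' \<noteq> {}" using insert.prems(2) \<open>S' \<in> \<F>\<close> unfolding linked_family_def by auto
    obtain c1 where c1: "c1 \<in> C \<inter> S" using ne by blast
    obtain c2 where c2: "c2 \<in> C \<inter> S'" using insert.prems(5) \<open>S' \<in> \<F>\<close> by blast
    have "S \<in> \<S>" "S' \<in> \<S>" using insert.prems(1) \<open>S' \<in> \<F>\<close> by auto
    then have "C \<inter> S \<inter> S' \<noteq> {}" using pair[OF insert.prems(3) _ _ i c1 c2] by blast
    then show "S' \<inter> ?C \<noteq> {}" by blast
  qed
  have "linked_family \<F>" using insert.prems(2) unfolding linked_family_def by auto
  then have "?C \<inter> \<Inter>\<F> \<noteq> {}" using insert.IH[OF _ _ cv ne meet] insert.prems(1) by auto
  then show ?case by auto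
qed

lemma helly:
  assumes "\<M> \<subseteq> \<S>" "linked_family \<M>" "S_convex X \<S> C" "closedin X C" "C \<noteq> {}" "\<forall>S\<in>\<M>. S \<inter> C \<noteq> {}"
  shows "C \<inter> \<Inter>\<M> \<noteq> {}"
proof -
  have "compactin X C" using closedin_compact_space[OF cpt assms(4)] .
  moreover have "\<forall>F. finite F \<and> F \<subseteq> \<M> \<longrightarrow> C \<inter> \<Inter>F \<noteq> {}"
  proof (intro allI impI)
    fix F assume F: "finite F \<and> F \<subseteq> \<M>"
    then have "linked_family F" using assms(2) unfolding linked_family_def by auto
    then show "C \<inter> \<Inter>F \<noteq> {}" using helly_fin[of F C] F assms by auto
  qed
  moreover have "\<forall>S\<in>\<M>. closedin X S" using assms(1) S_closed by auto
  ultimately show ?thesis unfolding compactin_fip by blast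
qed

context
  fixes Y :: "'b topology" and f :: "'a \<Rightarrow> 'b"
  assumes hdY: "Hausdorff_space Y" and fc: "continuous_map X Y f" and fo: "open_map X Y f"
    and fs: "f ` topspace X = topspace Y" and fcv: "S_convex_map X \<S> Y f"
begin

definition fib :: "'b \<Rightarrow> 'a set" where "fib y = {x \<in> topspace X. f x = y}"
definition MM :: "'b \<Rightarrow> 'a set set \<Rightarrow> 'a set set" where
  "MM y \<eta> = {S\<in>\<S>. S \<inter> fib y \<noteq> {} \<and> (\<exists>F\<in>\<eta>. F \<subseteq> S)}"
definition pp :: "'b \<Rightarrow> 'a set set \<Rightarrow> 'a" where
  "pp y \<eta> = (THE x. x \<in> fib y \<and> (\<forall>S\<in>MM y \<eta>. x \<in> S))"

lemma fib_closed: "y \<in> topspace Y \<Longrightarrow> closedin X (fib y)"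
proof -
  assume y: "y \<in> topspace Y"
  have "closedin Y {y}" by (intro closedin_t1_singleton Hausdorff_imp_t1_space hdY y)
  from closedin_continuous_map_preimage[OF fc this] show ?thesis unfolding fib_def by simp
qed

lemma fib_ne: "y \<in> topspace Y \<Longrightarrow> fib y \<noteq> {}"
  using fs unfolding fib_def by (metis (mono_tags, lifting) empty_iff image_iff mem_Collect_eq)

lemma fib_cv: "y \<in> topspace Y \<Longrightarrow> S_convex X \<S> (fib y)"
  using fcv unfolding S_convex_map_def fib_def by blast

lemma MM_linked: "max_linked_system X \<eta> \<Longrightarrow> linked_family (MM y \<eta>)"
  unfolding linked_family_def MM_def
proof (intro ballI)
  fix A B assume "max_linked_system X \<eta>" and A: "A \<in> {S\<in>\<S>. S \<inter> fib y \<noteq> {} \<and> (\<exists>F\<in>\<eta>. F \<subseteq> S)}"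
    and B: "B \<in> {S\<in>\<S>. S \<inter> fib y \<noteq> {} \<and> (\<exists>F\<in>\<eta>. F \<subseteq> S)}"
  then obtain F G where "F \<in> \<eta>" "F \<subseteq> A" "G \<in> \<eta>" "G \<subseteq> B" by blast
  with ml_linked[OF \<open>max_linked_system X \<eta>\<close>] show "A \<inter> B \<noteq> {}" by blast
qed

lemma pp_exists:
  assumes "y \<in> topspace Y" "max_linked_system X \<eta>"
  shows "\<exists>x. x \<in> fib y \<and> (\<forall>S\<in>MM y \<eta>. x \<in> S)"
proof -
  have "MM y \<eta> \<subseteq> \<S>" unfolding MM_def by auto
  moreover have "\<forall>S\<in>MM y \<eta>. S \<inter> fib y \<noteq> {}" unfolding MM_def by auto
  ultimately have "fib y \<inter> \<Inter>(MM y \<eta>) \<noteq> {}"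
    using helly[OF _ MM_linked[OF assms(2)] fib_cv[OF assms(1)] fib_closed[OF assms(1)] fib_ne[OF assms(1)]]
    by blast
  then show ?thesis by blast
qed

lemma pp_unique:
  assumes "y \<in> topspace Y" "max_linked_system X \<eta>"
    and a: "a \<in> fib y" "\<forall>S\<in>MM y \<eta>. a \<in> S" and b: "b \<in> fib y" "\<forall>S\<in>MM y \<eta>. b \<in> S"
  shows "a = b"
proof (rule ccontr)
  assume "a \<noteq> b"
  have at: "a \<in> topspace X" and bt: "b \<in> topspace X" using a(1) b(1) unfolding fib_def by auto
  obtain S where S: "S \<in> \<S>" "a \<in> S" "b \<notin> S" using sep[OF at bt \<open>a \<noteq> b\<close>] by blast
  then have "S \<noteq> {}" by auto
  obtain T0 T1 where T: "T0 \<in> \<S>" "T1 \<in> \<S>" "S \<inter> T1 = {}" "b \<notin> T0" "T0 \<union> T1 = topspace X"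
    using sep2[OF S(1) \<open>S \<noteq> {}\<close> bt S(3)] by blast
  have aT0: "a \<in> T0" using T(3,5) S(2) at by blast
  have bT1: "b \<in> T1" using T(4,5) bt by blast
  have "T0 \<in> \<eta> \<or> (\<exists>F\<in>\<eta>. F \<subseteq> T1)" using ml_dich[OF top_ne assms(2) S_closed[OF T(1)] T(5)] .
  then show False
  proof
    assume "T0 \<in> \<eta>"
    then have "T0 \<in> MM y \<eta>" using T(1) aT0 a(1) unfolding MM_def by blast
    then show False using b(2) T(4) by blast
  next
    assume "\<exists>F\<in>\<eta>. F \<subseteq> T1"
    then have "T1 \<in> MM y \<eta>" using T(2) bT1 b(1) unfolding MM_def by blast
    then show False using a(2) T(3) S(2) by blast
  qed
qed

lemma pp_props:
  assumes "y \<in> topspace Y" "max_linked_system X \<eta>"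
  shows "pp y \<eta> \<in> fib y \<and> (\<forall>S\<in>MM y \<eta>. pp y \<eta> \<in> S)"
proof -
  obtain x where x: "x \<in> fib y \<and> (\<forall>S\<in>MM y \<eta>. x \<in> S)" using pp_exists[OF assms] by blast
  have "pp y \<eta> = x" unfolding pp_def
  proof (rule the_equality)
    show "x \<in> fib y \<and> (\<forall>S\<in>MM y \<eta>. x \<in> S)" by (rule x)
  next
    fix z assume "z \<in> fib y \<and> (\<forall>S\<in>MM y \<eta>. z \<in> S)"
    then show "z = x" using pp_unique[OF assms] x by blast
  qed
  then show ?thesis using x by simp
qed

lemma pp_eq:
  assumes "y \<in> topspace Y" "max_linked_system X \<eta>" "x \<in> fib y" "\<forall>S\<in>MM y \<eta>. x \<in> S"
  shows "pp y \<eta> = x"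
  using pp_props[OF assms(1,2)] pp_unique[OF assms(1,2)] assms(3,4) by blast

definition ee :: "'a \<Rightarrow> 'a set set" where "ee x = {F. closedin X F \<and> x \<in> F}"

lemma ee_ml:
  assumes x: "x \<in> topspace X" shows "max_linked_system X (ee x)"
proof -
  have c1: "\<forall>F\<in>ee x. closedin X F" unfolding ee_def by auto
  have c2: "linked_family (ee x)" unfolding ee_def linked_family_def by auto
  have c3: "\<xi> = ee x" if H: "ee x \<subseteq> \<xi>" "\<forall>F\<in>\<xi>. closedin X F" "linked_family \<xi>" for \<xi>
  proof -
    have "closedin X {x}" by (intro closedin_t1_singleton Hausdorff_imp_t1_space hd x)
    then have "{x} \<in> ee x" unfolding ee_def by auto
    then have xi: "{x} \<in> \<xi>" using H(1) by blast
    have "\<xi> \<subseteq> ee x"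
    proof
      fix F assume F: "F \<in> \<xi>"
      then have "F \<inter> {x} \<noteq> {}" using H(3) xi unfolding linked_family_def by blast
      then have "x \<in> F" by blast
      moreover have "closedin X F" using H(2) F by blast
      ultimately show "F \<in> ee x" unfolding ee_def by blast
    qed
    then show ?thesis using H(1) by blast
  qed
  show ?thesis unfolding max_linked_system_def using c1 c2 c3 by blast
qed

lemma ee_cont: "continuous_map X (superextension X) ee"
  unfolding superextension_def continuous_map_in_subtopology
proof (intro conjI)
  show "ee \<in> topspace X \<rightarrow> superext_space X" using ee_ml unfolding superext_space_def by auto
  show "continuous_map X (topology_generated_by {superext_plus X U |U. openin X U}) ee"
  proof (rule continuous_on_generated_topo)
    fix W assume "W \<in> {superext_plus X U |U. openin X U}"
    then obtain U where U: "openin X U" "W = superext_plus X U" by blast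
    have "ee -` W \<inter> topspace X = U"
    proof
      show "ee -` W \<inter> topspace X \<subseteq> U" unfolding U(2) superext_plus_def ee_def by auto
      show "U \<subseteq> ee -` W \<inter> topspace X"
      proof
        fix x assume "x \<in> U"
        then have x: "x \<in> topspace X" using openin_subset U(1) by blast
        have "closedin X {x}" by (intro closedin_t1_singleton Hausdorff_imp_t1_space hd x)
        then have "{x} \<in> ee x" unfolding ee_def by auto
        moreover have "ee x \<in> superext_space X" using ee_ml[OF x] unfolding superext_space_def by auto
        ultimately show "x \<in> ee -` W \<inter> topspace X" using \<open>x \<in> U\<close> x unfolding U(2) superext_plus_def by auto
      qed
    qed
    then show "openin X (ee -` W \<inter> topspace X)" using U(1) by simp
  next
    show "ee ` topspace X \<subseteq> \<Union> {superext_plus X U |U. openin X U}"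
    proof
      fix e assume "e \<in> ee ` topspace X"
      then obtain x where x: "x \<in> topspace X" "e = ee x" by blast
      have "ee x \<in> superext_plus X (topspace X)"
        using ee_ml[OF x(1)] x(1) unfolding superext_plus_def superext_space_def ee_def by auto
      then show "e \<in> \<Union> {superext_plus X U |U. openin X U}" using x(2) by blast
    qed
  qed
qed

lemma pp_ee: "x \<in> topspace X \<Longrightarrow> pp (f x) (ee x) = x"
proof -
  assume x: "x \<in> topspace X"
  have y: "f x \<in> topspace Y" using fs x by blast
  show ?thesis
  proof (rule pp_eq[OF y ee_ml[OF x]])
    show "x \<in> fib (f x)" using x unfolding fib_def by auto
    show "\<forall>S\<in>MM (f x) (ee x). x \<in> S" unfolding MM_def ee_def by auto
  qed
qed

lemma sup_top: "topspace (superextension X) \<subseteq> superext_space X"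
  unfolding superextension_def by simp

lemma cont_main:
  fixes Z :: "'z topology"
  assumes kc: "continuous_map Z Y k" and Gc: "continuous_map Z (superextension X) G"
  shows "continuous_map Z X (\<lambda>z. pp (k z) (G z))"
proof -
  define g where "g = (\<lambda>z. pp (k z) (G z))"
  have ky: "k z \<in> topspace Y" if "z \<in> topspace Z" for z
    using continuous_map_image_subset_topspace[OF kc] that by blast
  have Gm: "max_linked_system X (G z)" if "z \<in> topspace Z" for z
  proof -
    have "G z \<in> topspace (superextension X)" using continuous_map_image_subset_topspace[OF Gc] that by blast
    then show ?thesis using sup_top unfolding superext_space_def by blast
  qed
  have gp: "g z \<in> fib (k z) \<and> (\<forall>S\<in>MM (k z) (G z). g z \<in> S)" if "z \<in> topspace Z" for z
    unfolding g_def by (rule pp_props[OF ky[OF that] Gm[OF that]])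
  have gt: "g z \<in> topspace X" if "z \<in> topspace Z" for z
    using gp[OF that] unfolding fib_def by blast
  have key: "closedin Z {z \<in> topspace Z. g z \<in> S}" if S: "S \<in> \<S>" for S
  proof (cases "S = {}")
    case True then show ?thesis by simp
  next
    case Sne: False
    have "openin Z (topspace Z - {z \<in> topspace Z. g z \<in> S})"
    proof (subst openin_subopen, intro ballI)
      fix z0 assume z0: "z0 \<in> topspace Z - {z \<in> topspace Z. g z \<in> S}"
      then have z0t: "z0 \<in> topspace Z" and x0S: "g z0 \<notin> S" by auto
      define x0 where "x0 = g z0"
      define y0 where "y0 = k z0"
      define \<eta>0 where "\<eta>0 = G z0"
      have x0t: "x0 \<in> topspace X" using gt[OF z0t] x0_def by simp
      obtain T0 T1 where T: "T0 \<in> \<S>" "T1 \<in> \<S>" "S \<inter> T1 = {}" "x0 \<notin> T0" "T0 \<union> T1 = topspace X"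
        using sep2[OF S Sne x0t] x0S x0_def by blast
      show "\<exists>W. openin Z W \<and> z0 \<in> W \<and> W \<subseteq> topspace Z - {z \<in> topspace Z. g z \<in> S}"
      proof (cases "T0 \<inter> fib y0 = {}")
        case True
        have "fib y0 \<subseteq> T1" using True T(5) unfolding fib_def by blast
        then have C0S: "fib y0 \<inter> S = {}" using T(3) by blast
        have "compactin X S" by (rule closedin_compact_space[OF cpt S_closed[OF S]])
        then have "compactin Y (f ` S)" using image_compactin fc by blast
        then have "closedin Y (f ` S)" using compactin_imp_closedin hdY by blast
        then have "openin Y (topspace Y - f ` S)" by blast
        define W where "W = {z \<in> topspace Z. k z \<in> topspace Y - f ` S}"
        have "openin Z W" unfolding W_def by (rule openin_continuous_map_preimage[OF kc]) fact
        moreover have "z0 \<in> W"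
        proof -
          have "k z0 \<notin> f ` S"
          proof
            assume "k z0 \<in> f ` S"
            then obtain s where "s \<in> S" "f s = y0" using y0_def by auto
            then have "s \<in> fib y0" using S_sub[OF S] unfolding fib_def by auto
            with C0S \<open>s \<in> S\<close> show False by blast
          qed
          then show ?thesis unfolding W_def using z0t ky by blast
        qed
        moreover have "W \<subseteq> topspace Z - {z \<in> topspace Z. g z \<in> S}"
        proof
          fix z assume "z \<in> W"
          then have zt: "z \<in> topspace Z" and "k z \<notin> f ` S" unfolding W_def by auto
          have "f (g z) = k z" using gp[OF zt] unfolding fib_def by auto
          then have "g z \<notin> S" using \<open>k z \<notin> f ` S\<close> by force
          then show "z \<in> topspace Z - {z \<in> topspace Z. g z \<in> S}" using zt by auto
        qed
        ultimately show ?thesis by blast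
      next
        case False
        define U where "U = topspace X - T0"
        have Uo: "openin X U" unfolding U_def using S_closed[OF T(1)] by blast
        have UT1: "U \<subseteq> T1" using T(5) unfolding U_def by blast
        have m0: "max_linked_system X \<eta>0" using Gm[OF z0t] \<eta>0_def by simp
        have "T0 \<notin> MM y0 \<eta>0"
        proof
          assume "T0 \<in> MM y0 \<eta>0"
          then have "g z0 \<in> T0" using gp[OF z0t] y0_def \<eta>0_def by blast
          then show False using T(4) x0_def by simp
        qed
        then have nF: "\<not> (\<exists>F\<in>\<eta>0. F \<subseteq> T0)" using False T(1) unfolding MM_def by blast
        have "\<exists>F\<in>\<eta>0. F \<inter> T0 = {}"
        proof (rule ccontr)
          assume "\<not> ?thesis"
          then have "T0 \<in> \<eta>0" using ml_add[OF top_ne m0 S_closed[OF T(1)]] by blast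
          then show False using nF by blast
        qed
        then obtain F where F: "F \<in> \<eta>0" "F \<inter> T0 = {}" by blast
        have "F \<subseteq> U" using F ml_closed[OF m0 F(1)] closedin_subset unfolding U_def by blast
        have open1: "openin Y (f ` U)" using fo Uo unfolding open_map_def by blast
        have open2: "openin (superextension X) (superext_plus X U)"
          unfolding superextension_def openin_subtopology
        proof (intro exI conjI)
          show "openin (topology_generated_by {superext_plus X U |U. openin X U}) (superext_plus X U)"
            using Uo by (intro topology_generated_by_Basis) blast
          show "superext_plus X U = superext_plus X U \<inter> superext_space X"
            unfolding superext_plus_def by blast
        qed
        define W where "W = {z \<in> topspace Z. k z \<in> f ` U} \<inter> {z \<in> topspace Z. G z \<in> superext_plus X U}"
        have "openin Z W" unfolding W_def
          by (intro openin_Int openin_continuous_map_preimage[OF kc open1] openin_continuous_map_preimage[OF Gc open2])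
        moreover have "z0 \<in> W"
        proof -
          have "x0 \<in> U" using x0t T(4) unfolding U_def by blast
          moreover have "f x0 = y0" using gp[OF z0t] x0_def y0_def unfolding fib_def by auto
          ultimately have "k z0 \<in> f ` U" using y0_def by (metis image_eqI)
          moreover have "G z0 \<in> superext_plus X U"
            using m0 F(1) \<open>F \<subseteq> U\<close> \<eta>0_def unfolding superext_plus_def superext_space_def by auto
          ultimately show ?thesis unfolding W_def using z0t by blast
        qed
        moreover have "W \<subseteq> topspace Z - {z \<in> topspace Z. g z \<in> S}"
        proof
          fix z assume "z \<in> W"
          then have zt: "z \<in> topspace Z" and kU: "k z \<in> f ` U" and GU: "G z \<in> superext_plus X U"
            unfolding W_def by auto
          obtain u where u: "u \<in> U" "f u = k z" using kU by auto
          have "u \<in> fib (k z)" using u Uo openin_subset unfolding fib_def by blast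
          then have "T1 \<inter> fib (k z) \<noteq> {}" using u(1) UT1 by blast
          moreover obtain F' where "F' \<in> G z" "F' \<subseteq> U" using GU unfolding superext_plus_def by blast
          ultimately have "T1 \<in> MM (k z) (G z)" using T(2) UT1 unfolding MM_def by blast
          then have "g z \<in> T1" using gp[OF zt] by blast
          then have "g z \<notin> S" using T(3) by blast
          then show "z \<in> topspace Z - {z \<in> topspace Z. g z \<in> S}" using zt by auto
        qed
        ultimately show ?thesis by blast
      qed
    qed
    then show ?thesis unfolding closedin_def by auto
  qed
  have "closedin Z {z \<in> topspace Z. g z \<in> C}" if C: "closedin X C" for C
  proof -
    obtain \<B> where B: "\<forall>B\<in>\<B>. \<exists>\<T>. finite \<T> \<and> \<T> \<subseteq> \<S> \<and> B = \<Union>\<T>" "C = topspace X \<inter> \<Inter>\<B>"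
      using sb[unfolded closed_subbase_def, THEN conjunct2, rule_format, OF C] by blast
    have cB: "closedin Z {z \<in> topspace Z. g z \<in> B}" if hB: "B \<in> \<B>" for B
    proof -
      obtain \<T> where T0: "finite \<T> \<and> \<T> \<subseteq> \<S> \<and> B = \<Union>\<T>" using bspec[OF B(1) hB] by (rule exE)
      then have T: "finite \<T>" "\<T> \<subseteq> \<S>" "B = \<Union>\<T>" using T0 by simp_all
      have "{z \<in> topspace Z. g z \<in> B} = \<Union>((\<lambda>S. {z \<in> topspace Z. g z \<in> S}) ` \<T>)" using T(3) by auto
      moreover have "closedin Z (\<Union>((\<lambda>S. {z \<in> topspace Z. g z \<in> S}) ` \<T>))"
        using T(1,2) key by (intro closedin_Union) auto
      ultimately show ?thesis by simp
    qed
    have "{z \<in> topspace Z. g z \<in> C} = \<Inter>(insert (topspace Z) ((\<lambda>B. {z \<in> topspace Z. g z \<in> B}) ` \<B>))"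
      using B(2) gt by auto
    moreover have "closedin Z (\<Inter>(insert (topspace Z) ((\<lambda>B. {z \<in> topspace Z. g z \<in> B}) ` \<B>)))"
      using cB by (intro closedin_Inter) auto
    ultimately show ?thesis by simp
  qed
  then have "continuous_map Z X g" unfolding continuous_map_closedin using gt by auto
  then show ?thesis unfolding g_def .
qed

lemma soft_main: "absolute_extensor_for (superextension X) (Z :: 'z topology) \<Longrightarrow>
  closedin Z A \<Longrightarrow> continuous_map Z Y k \<Longrightarrow> continuous_map (subtopology Z A) X h \<Longrightarrow> (\<forall>a\<in>A. f (h a) = k a) \<Longrightarrow>
  (\<exists>g. continuous_map Z X g \<and> (\<forall>a\<in>A. g a = h a) \<and> (\<forall>z\<in>topspace Z. f (g z) = k z))"
proof -
  assume ae: "absolute_extensor_for (superextension X) Z" and A: "closedin Z A" and kc: "continuous_map Z Y k"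
    and hc: "continuous_map (subtopology Z A) X h" and hk: "\<forall>a\<in>A. f (h a) = k a"
  have "continuous_map (subtopology Z A) (superextension X) (ee \<circ> h)"
    using continuous_map_compose[OF hc ee_cont] .
  then obtain G where Gc: "continuous_map Z (superextension X) G" and GA: "\<forall>a\<in>A. G a = (ee \<circ> h) a"
    using ae A unfolding absolute_extensor_for_def by blast
  define g where "g = (\<lambda>z. pp (k z) (G z))"
  have gc: "continuous_map Z X g" unfolding g_def by (rule cont_main[OF kc Gc])
  have AZ: "A \<subseteq> topspace Z" using A closedin_subset by blast
  have "\<forall>a\<in>A. g a = h a"
  proof
    fix a assume aA: "a \<in> A"
    have "a \<in> topspace (subtopology Z A)" using aA AZ by auto
    then have ht: "h a \<in> topspace X" using continuous_map_image_subset_topspace[OF hc] by blast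
    have "g a = pp (k a) (G a)" unfolding g_def by simp
    also have "\<dots> = pp (f (h a)) (ee (h a))" using GA hk aA by simp
    also have "\<dots> = h a" by (rule pp_ee[OF ht])
    finally show "g a = h a" .
  qed
  moreover have "\<forall>z\<in>topspace Z. f (g z) = k z"
  proof
    fix z assume zt: "z \<in> topspace Z"
    have ky: "k z \<in> topspace Y" using continuous_map_image_subset_topspace[OF kc] zt by blast
    have "G z \<in> topspace (superextension X)" using continuous_map_image_subset_topspace[OF Gc] zt by blast
    then have "max_linked_system X (G z)" using sup_top unfolding superext_space_def by blast
    then have "g z \<in> fib (k z)" using pp_props[OF ky] unfolding g_def by blast
    then show "f (g z) = k z" unfolding fib_def by blast
  qed
  ultimately show ?thesis using gc by blast
qed

end

end

theorem corollary3p2: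
  fixes \<A> :: "'z topology set"
    and X :: "'a topology" and Y :: "'b topology"
    and \<S> :: "'a set set" and f :: "'a \<Rightarrow> 'b"
  assumes "\<forall>Z\<in>\<A>. tychonoff_space Z"
    and "compact_space X" and "Hausdorff_space X"
    and "closed_subbase X \<S>" and "binary_family X \<S>" and "normal_family X \<S>"
    and "\<forall>Z\<in>\<A>. absolute_extensor_for (superextension X) Z"
    and "tychonoff_space Y"
    and "continuous_map X Y f" and "open_map X Y f" and "f ` topspace X = topspace Y"
    and "S_convex_map X \<S> Y f"
  shows "soft_map \<A> X Y f"
proof -
  have hdY: "Hausdorff_space Y" using assms(8) unfolding tychonoff_space_def by blast
  show ?thesis unfolding soft_map_def
  proof (intro ballI allI impI)
    fix Z A k h assume Z: "Z \<in> \<A>"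
      and H: "closedin Z A \<and> continuous_map Z Y k \<and> continuous_map (subtopology Z A) X h \<and> (\<forall>a\<in>A. f (h a) = k a)"
    have ae: "absolute_extensor_for (superextension X) Z" using assms(7) Z by blast
    show "\<exists>g. continuous_map Z X g \<and> (\<forall>a\<in>A. g a = h a) \<and> (\<forall>z\<in>topspace Z. f (g z) = k z)"
      using soft_main[OF assms(2,3,4,5,6) hdY assms(9,10,11,12) ae] H by blast
  qed
qed

end
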